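(* Let $1<\alpha<2$, $h>0$, and $(u_k)_{k\in\mathbb{Z}}$ real numbers with $\sum_{k\in\mathbb{Z}}|u_k|(1+|k|)^{1-\alpha}<\infty$. Set $\beta=2-\alpha$ and, for $j\in\mathbb{Z}$, $$I^L_j=h^{\beta}\sum_{m=0}^\infty u_{j-m}v_m^{(\beta)},\qquad I^R_j=h^{\beta}\sum_{m=0}^\infty u_{j+m}v_m^{(\beta)},$$ with $v_m^{(\beta)}$ as defined in the context. Then for every $i\in\mathbb{Z}$, $$-\left[c_L\,\frac{I^L_{i-1}-2I^L_i+I^L_{i+1}}{h^2}+c_R\,\frac{I^R_{i-1}-2I^R_i+I^R_{i+1}}{h^2}\right]=\frac{1}{h^{\alpha}}\sum_{k=-\infty}^{\infty}u_{i+k}\,w_k^{(\alpha)},$$ with $w_k^{(\alpha)}$ as defined in the context, all series converging absolutely.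
   Context: For $\beta>0$: $v_0^{(\beta)}=1/\Gamma(2+\beta)$ and $v_m^{(\beta)}=\big((m+1)^{1+\beta}-2m^{1+\beta}+(m-1)^{1+\beta}\big)/\Gamma(2+\beta)$ for $m\ge1$. For $1<\alpha<2$ and real $\theta$ with $|\theta|\le 2-\alpha$, set $c_L=\sin\frac{(\alpha-\theta)\pi}{2}/\sin(\alpha\pi)$ and $c_R=\sin\frac{(\alpha+\theta)\pi}{2}/\sin(\alpha\pi)$. For integer $n\ge 2$ put $\Delta_n^{(\alpha)}=(n+2)^{3-\alpha}-4(n+1)^{3-\alpha}+6n^{3-\alpha}-4(n-1)^{3-\alpha}+(n-2)^{3-\alpha}$ (with $0^{3-\alpha}=0$). Define $w_k^{(\alpha)}=\frac{-1}{\Gamma(4-\alpha)}\times$: $\Delta^{(\alpha)}_{|k|}\,c_L$ for $k\le -2$; $(3^{3-\alpha}-2^{5-\alpha}+6)c_L+c_R$ for $k=-1$; $(2^{3-\alpha}-4)(c_L+c_R)$ for $k=0$; $(3^{3-\alpha}-2^{5-\alpha}+6)c_R+c_L$ for $k=1$; $\Delta^{(\alpha)}_{k}\,c_R$ for $k\ge 2$. The left side is the central second difference of the discretized Weyl integrals of order $2-\alpha$, approximating the Riesz–Feller derivative $-[c_L\frac{d^2}{dx^2}{}_{-\infty}I_x^{2-\alpha}u+c_R\frac{d^2}{dx^2}{}_xI_{\infty}^{2-\alpha}u]$. *)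

theory Defs
  imports "HOL-Analysis.Analysis"
begin

definition vcoef :: "real \<Rightarrow> nat \<Rightarrow> real" where
  "vcoef \<beta> m = (if m = 0 then 1 / Gamma (2 + \<beta>)
     else ((real m + 1) powr (1 + \<beta>) - 2 * real m powr (1 + \<beta>)
           + (real m - 1) powr (1 + \<beta>)) / Gamma (2 + \<beta>))"

definition cL :: "real \<Rightarrow> real \<Rightarrow> real" where
  "cL \<alpha> \<theta> = sin ((\<alpha> - \<theta>) * pi / 2) / sin (\<alpha> * pi)"

definition cR :: "real \<Rightarrow> real \<Rightarrow> real" where
  "cR \<alpha> \<theta> = sin ((\<alpha> + \<theta>) * pi / 2) / sin (\<alpha> * pi)"

text \<open>Fourth difference; for n = 2 the last term is 0 powr (3 - alpha) = 0.\<close>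
definition Delta4 :: "real \<Rightarrow> nat \<Rightarrow> real" where
  "Delta4 \<alpha> n = (real n + 2) powr (3 - \<alpha>) - 4 * (real n + 1) powr (3 - \<alpha>)
     + 6 * real n powr (3 - \<alpha>) - 4 * (real n - 1) powr (3 - \<alpha>)
     + (real n - 2) powr (3 - \<alpha>)"

definition wcoef :: "real \<Rightarrow> real \<Rightarrow> int \<Rightarrow> real" where
  "wcoef \<alpha> \<theta> k = (-1 / Gamma (4 - \<alpha>)) *
     (if k \<le> -2 then Delta4 \<alpha> (nat \<bar>k\<bar>) * cL \<alpha> \<theta>
      else if k = -1 then (3 powr (3 - \<alpha>) - 2 powr (5 - \<alpha>) + 6) * cL \<alpha> \<theta> + cR \<alpha> \<theta>
      else if k = 0 then (2 powr (3 - \<alpha>) - 4) * (cL \<alpha> \<theta> + cR \<alpha> \<theta>)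
      else if k = 1 then (3 powr (3 - \<alpha>) - 2 powr (5 - \<alpha>) + 6) * cR \<alpha> \<theta> + cL \<alpha> \<theta>
      else Delta4 \<alpha> (nat k) * cR \<alpha> \<theta>)"

definition IL :: "real \<Rightarrow> real \<Rightarrow> (int \<Rightarrow> real) \<Rightarrow> int \<Rightarrow> real" where
  "IL \<beta> h u j = h powr \<beta> * (\<Sum>\<^sub>\<infinity>m\<in>(UNIV::nat set). u (j - int m) * vcoef \<beta> m)"

definition IR :: "real \<Rightarrow> real \<Rightarrow> (int \<Rightarrow> real) \<Rightarrow> int \<Rightarrow> real" where
  "IR \<beta> h u j = h powr \<beta> * (\<Sum>\<^sub>\<infinity>m\<in>(UNIV::nat set). u (j + int m) * vcoef \<beta> m)"

end

theory Submission
  imports Defs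
begin

lemma second_diff_bound:
  fixes p :: real and m :: real
  assumes p1: "1 < p" and p2: "p < 2" and m2: "2 \<le> m"
  shows "\<bar>(m + 1) powr p - 2 * m powr p + (m - 1) powr p\<bar> \<le> 2 * p * (p - 1) * 3 powr (2 - p) * (m + 1) powr (p - 2)"
proof -
  define f' where "f' = (\<lambda>x::real. p * x powr (p - 1))"
  define f'' where "f'' = (\<lambda>x::real. (p - 1) * (p * x powr (p - 1 - 1)))"
  have D1: "DERIV (\<lambda>x. x powr p) x :> f' x" if "0 < x" for x
    using has_real_derivative_powr[OF that, of p] unfolding f'_def by simp
  have D2: "DERIV f' x :> f'' x" if "0 < x" for x
    unfolding f'_def f''_def
    using DERIV_cmult[OF has_real_derivative_powr[OF that, of "p - 1"], of p]
    by (simp add: algebra_simps)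
  obtain x1 where x1: "m < x1" "x1 < m + 1" "(m+1) powr p - m powr p = (m + 1 - m) * f' x1"
    using MVT2[of m "m+1" "\<lambda>x. x powr p" f'] D1 m2 by force
  obtain x2 where x2: "m - 1 < x2" "x2 < m" "m powr p - (m - 1) powr p = (m - (m - 1)) * f' x2"
    using MVT2[of "m - 1" m "\<lambda>x. x powr p" f'] D1 m2 by force
  obtain y where y: "x2 < y" "y < x1" "f' x1 - f' x2 = (x1 - x2) * f'' y"
    using MVT2[of x2 x1 f' f''] D2 x1 x2 m2 by force
  have eq: "(m + 1) powr p - 2 * m powr p + (m - 1) powr p = (x1 - x2) * f'' y"
    using x1 x2 y by simp
  have ypos: "m - 1 < y" using x2 y by simp
  have "y powr (p - 2) \<le> (m - 1) powr (p - 2)"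
    using ypos m2 p2 by (intro powr_mono2') auto
  also have "(m - 1) powr (p - 2) \<le> 3 powr (2 - p) * (m + 1) powr (p - 2)"
  proof -
    have "(3 * (m - 1)) powr (p - 2) \<le> (m + 1) powr (p - 2)"
      using m2 p2 by (intro powr_mono2') auto
    moreover have "(3 * (m - 1)) powr (p - 2) = 3 powr (p - 2) * (m - 1) powr (p - 2)"
      using m2 powr_mult[of 3 "m - 1" "p - 2"] by linarith
    ultimately have "3 powr (p - 2) * (m - 1) powr (p - 2) \<le> (m + 1) powr (p - 2)"
      by simp
    hence "3 powr (2 - p) * (3 powr (p - 2) * (m - 1) powr (p - 2)) \<le> 3 powr (2 - p) * (m + 1) powr (p - 2)"
      by (intro mult_left_mono) auto
    moreover have "3 powr (2 - p) * 3 powr (p - 2) = (1::real)"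
      by (simp add: powr_add[symmetric])
    ultimately show ?thesis by (simp add: mult.assoc[symmetric])
  qed
  finally have yb: "y powr (p - 2) \<le> 3 powr (2 - p) * (m + 1) powr (p - 2)" .
  have "\<bar>(x1 - x2) * f'' y\<bar> = (x1 - x2) * ((p - 1) * p * y powr (p - 2))"
    using x1 x2 y p1 ypos m2 unfolding f''_def by (simp add: abs_mult)
  also have "\<dots> \<le> 2 * ((p - 1) * p * (3 powr (2 - p) * (m + 1) powr (p - 2)))"
    using x1 x2 p1 yb
    by (intro mult_mono mult_left_mono) auto
  finally show ?thesis using eq by (simp add: algebra_simps)
qed


lemma vcoef_pos_eq:
  assumes "m \<ge> 1"
  shows "vcoef (2 - \<alpha>) m = ((real m + 1) powr (3 - \<alpha>) - 2 * real m powr (3 - \<alpha>)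
           + (real m - 1) powr (3 - \<alpha>)) / Gamma (4 - \<alpha>)"
proof -
  have "1 + (2 - \<alpha>) = 3 - \<alpha>" "2 + (2 - \<alpha>) = 4 - \<alpha>" by simp_all
  thus ?thesis using assms unfolding vcoef_def by auto
qed

lemma vcoef0: "vcoef (2 - \<alpha>) 0 = 1 / Gamma (4 - \<alpha>)"
proof -
  have "2 + (2 - \<alpha>) = 4 - \<alpha>" by simp
  thus ?thesis unfolding vcoef_def by auto
qed

lemma wcoef_eq:
  fixes \<alpha> \<theta> :: real and k :: int
  assumes al: "\<alpha> < 2"
  defines "V \<equiv> (\<lambda>n::int. if 0 \<le> n then vcoef (2 - \<alpha>) (nat n) else 0)"
  shows "wcoef \<alpha> \<theta> k = - (cL \<alpha> \<theta> * (V (-1-k) - 2 * V (-k) + V (1 - k))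
                         + cR \<alpha> \<theta> * (V (k + 1) - 2 * V k + V (k - 1)))"
proof -
  define G where "G = Gamma (4 - \<alpha>)"
  define q where "q = 3 - \<alpha>"
  have Gp: "Gamma (4 - \<alpha>) > 0" using al by (intro Gamma_real_pos) simp
  hence Gne: "Gamma (4 - \<alpha>) \<noteq> 0" by simp
  have v0: "vcoef (2 - \<alpha>) 0 = 1 / G" unfolding G_def by (rule vcoef0)
  have vm: "vcoef (2 - \<alpha>) m = ((real m + 1) powr q - 2 * real m powr q + (real m - 1) powr q) / G"
    if "m \<ge> 1" for m unfolding G_def q_def using that by (rule vcoef_pos_eq)
  have v1: "vcoef (2 - \<alpha>) 1 = (2 powr q - 2) / G" using vm[of 1] by simp
  have v2: "vcoef (2 - \<alpha>) 2 = (3 powr q - 2 * 2 powr q + 1) / G" using vm[of 2] by simp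
  have p5: "2 powr (5 - \<alpha>) = 4 * 2 powr q"
  proof -
    have "(2::real) powr (5 - \<alpha>) = 2 powr (2 + q)" unfolding q_def by simp
    also have "\<dots> = 2 powr 2 * 2 powr q" by (rule powr_add)
    finally show ?thesis by simp
  qed
  have Vs: "V 0 = 1 / G" "V 1 = (2 powr q - 2) / G" "V 2 = (3 powr q - 2 * 2 powr q + 1) / G"
    "V (-1) = 0" "V (-2) = 0" unfolding V_def using v0 v1 v2 by (auto simp: numeral_eq_Suc)
  consider "k \<le> -2" | "k = -1" | "k = 0" | "k = 1" | "k \<ge> 2" by linarith
  then show ?thesis
  proof cases
    case 1
    define n where "n = nat (-k)"
    have n2: "n \<ge> 2" and kn: "k = - int n" using 1 unfolding n_def by auto
    have a: "V (-1-k) = vcoef (2 - \<alpha>) (n - 1)" unfolding V_def kn using n2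
      by (simp add: nat_diff_distrib)
    have b: "V (-k) = vcoef (2 - \<alpha>) n" unfolding V_def kn by simp
    have c: "V (1-k) = vcoef (2 - \<alpha>) (n + 1)" unfolding V_def kn
      by (simp add: nat_add_distrib)
    have d: "V (k+1) = 0" "V k = 0" "V (k - 1) = 0" unfolding V_def kn using n2 by auto
    have e: "nat \<bar>k\<bar> = n" unfolding kn by simp
    have rn: "real (n - 1) = real n - 1" using n2 by simp
    have va: "vcoef (2 - \<alpha>) (n - 1) = (real n powr q - 2 * (real n - 1) powr q + (real n - 2) powr q) / G"
      using vm[of "n - 1"] n2 rn by (simp add: algebra_simps)
    have vb: "vcoef (2 - \<alpha>) n = ((real n + 1) powr q - 2 * real n powr q + (real n - 1) powr q) / G"
      using vm[of n] n2 by simp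
    have vc: "vcoef (2 - \<alpha>) (n + 1) = ((real n + 2) powr q - 2 * (real n + 1) powr q + real n powr q) / G"
      using vm[of "n + 1"] n2 by (simp add: algebra_simps)
    show ?thesis
      unfolding a b c d wcoef_def e va vb vc
      using 1 n2
      by (simp add: Delta4_def q_def G_def field_simps Gne)
  next
    case 2
    then show ?thesis unfolding wcoef_def using p5 by (simp add: Vs q_def G_def field_simps Gne)
  next
    case 3
    then show ?thesis unfolding wcoef_def by (simp add: Vs q_def G_def field_simps Gne)
  next
    case 4
    then show ?thesis unfolding wcoef_def using p5 by (simp add: Vs q_def G_def field_simps Gne)
  next
    case 5
    define n where "n = nat k"
    have n2: "n \<ge> 2" and kn: "k = int n" using 5 unfolding n_def by auto
    have a: "V (k-1) = vcoef (2 - \<alpha>) (n - 1)" unfolding V_def kn using n2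
      by (simp add: nat_diff_distrib)
    have b: "V k = vcoef (2 - \<alpha>) n" unfolding V_def kn by simp
    have c: "V (k+1) = vcoef (2 - \<alpha>) (n + 1)" unfolding V_def kn
      by (simp add: nat_add_distrib)
    have d: "V (-1-k) = 0" "V (-k) = 0" "V (1 - k) = 0" unfolding V_def kn using n2 by auto
    have e: "nat k = n" unfolding kn by simp
    have rn: "real (n - 1) = real n - 1" using n2 by simp
    have va: "vcoef (2 - \<alpha>) (n - 1) = (real n powr q - 2 * (real n - 1) powr q + (real n - 2) powr q) / G"
      using vm[of "n - 1"] n2 rn by (simp add: algebra_simps)
    have vb: "vcoef (2 - \<alpha>) n = ((real n + 1) powr q - 2 * real n powr q + (real n - 1) powr q) / G"
      using vm[of n] n2 by simp
    have vc: "vcoef (2 - \<alpha>) (n + 1) = ((real n + 2) powr q - 2 * (real n + 1) powr q + real n powr q) / G"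
      using vm[of "n + 1"] n2 by (simp add: algebra_simps)
    show ?thesis
      unfolding a b c d wcoef_def e va vb vc
      using 5 n2
      by (simp add: Delta4_def q_def G_def field_simps Gne)
  qed
qed


lemma vcoef_bound:
  assumes "0 < \<beta>" "\<beta> < 1"
  shows "\<exists>C. \<forall>m. \<bar>vcoef \<beta> m\<bar> \<le> C * (1 + real m) powr (\<beta> - 1)"
proof -
  define p where "p = 1 + \<beta>"
  define K where "K = 2 * p * (p - 1) * 3 powr (2 - p) / Gamma (2 + \<beta>)"
  define C where "C = max K (max \<bar>vcoef \<beta> 0\<bar> (\<bar>vcoef \<beta> 1\<bar> * 2 powr (1 - \<beta>)))"
  have Gp: "Gamma (2 + \<beta>) > 0" using assms by (intro Gamma_real_pos) simp
  have "\<bar>vcoef \<beta> m\<bar> \<le> C * (1 + real m) powr (\<beta> - 1)" for m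
  proof -
    consider "m = 0" | "m = 1" | "m \<ge> 2" by linarith
    then show ?thesis
    proof cases
      case 1 then show ?thesis unfolding C_def by simp
    next
      case 2
      have "\<bar>vcoef \<beta> 1\<bar> = (\<bar>vcoef \<beta> 1\<bar> * 2 powr (1 - \<beta>)) * 2 powr (\<beta> - 1)"
        by (simp add: powr_add[symmetric])
      also have "\<dots> \<le> C * 2 powr (\<beta> - 1)"
        unfolding C_def by (intro mult_right_mono) auto
      finally show ?thesis using 2 by simp
    next
      case 3
      have b: "\<bar>(real m + 1) powr p - 2 * real m powr p + (real m - 1) powr p\<bar>
          \<le> 2 * p * (p - 1) * 3 powr (2 - p) * (real m + 1) powr (p - 2)"
        using 3 assms unfolding p_def by (intro second_diff_bound) auto
      have "\<bar>vcoef \<beta> m\<bar> = \<bar>(real m + 1) powr p - 2 * real m powr p + (real m - 1) powr p\<bar> / Gamma (2 + \<beta>)"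
        using 3 Gp unfolding vcoef_def p_def by simp
      also have "\<dots> \<le> 2 * p * (p - 1) * 3 powr (2 - p) * (real m + 1) powr (p - 2) / Gamma (2 + \<beta>)"
        using b Gp by (intro divide_right_mono) auto
      also have "\<dots> = K * (1 + real m) powr (\<beta> - 1)"
        unfolding K_def p_def by (simp add: algebra_simps)
      also have "\<dots> \<le> C * (1 + real m) powr (\<beta> - 1)"
        unfolding C_def by (intro mult_right_mono) auto
      finally show ?thesis .
    qed
  qed
  thus ?thesis by blast
qed

lemma nat_int_sum:
  fixes G :: "int \<Rightarrow> real"
  assumes "\<And>n. n < 0 \<Longrightarrow> G n = 0"
  shows "(\<lambda>m::nat. G (int m)) summable_on UNIV \<longleftrightarrow> G summable_on UNIV"
    and "infsum (\<lambda>m::nat. G (int m)) UNIV = infsum G UNIV"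
proof -
  have inj: "inj_on int (UNIV::nat set)" by (simp add: inj_on_def)
  have nz: "x \<in> UNIV - range int \<Longrightarrow> G x = 0" for x
    using assms by (metis DiffD2 nonneg_int_cases not_le rangeI)
  have 1: "G summable_on range int \<longleftrightarrow> G summable_on UNIV"
    by (rule summable_on_cong_neutral) (use nz in auto)
  have 2: "infsum G (range int) = infsum G UNIV"
    by (rule infsum_cong_neutral) (use nz in auto)
  show "(\<lambda>m::nat. G (int m)) summable_on UNIV \<longleftrightarrow> G summable_on UNIV"
    using summable_on_reindex[OF inj, of G] 1 by (simp add: o_def)
  show "infsum (\<lambda>m::nat. G (int m)) UNIV = infsum G UNIV"
    using infsum_reindex[OF inj, of G] 2 by (simp add: o_def)
qed

lemma shift_minus:
  fixes g :: "int \<Rightarrow> real" and c :: int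
  shows "(\<lambda>k. g (c - k)) summable_on UNIV \<longleftrightarrow> g summable_on UNIV"
    and "infsum (\<lambda>k. g (c - k)) UNIV = infsum g UNIV"
proof -
  have b: "bij_betw (\<lambda>k. c - k) UNIV UNIV"
    by (rule bij_betwI[where g = "\<lambda>k. c - k"]) auto
  show "(\<lambda>k. g (c - k)) summable_on UNIV \<longleftrightarrow> g summable_on UNIV"
    by (rule summable_on_reindex_bij_betw[OF b])
  show "infsum (\<lambda>k. g (c - k)) UNIV = infsum g UNIV"
    by (rule infsum_reindex_bij_betw[OF b])
qed

lemma shift_plus:
  fixes g :: "int \<Rightarrow> real" and c :: int
  shows "(\<lambda>k. g (k + c)) summable_on UNIV \<longleftrightarrow> g summable_on UNIV"
    and "infsum (\<lambda>k. g (k + c)) UNIV = infsum g UNIV"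
proof -
  have b: "bij_betw (\<lambda>k. k + c) UNIV UNIV"
    by (rule bij_betwI[where g = "\<lambda>k. k - c"]) auto
  show "(\<lambda>k. g (k + c)) summable_on UNIV \<longleftrightarrow> g summable_on UNIV"
    by (rule summable_on_reindex_bij_betw[OF b])
  show "infsum (\<lambda>k. g (k + c)) UNIV = infsum g UNIV"
    by (rule infsum_reindex_bij_betw[OF b])
qed

lemma powr_weight:
  fixes a b :: real and \<gamma> :: real
  assumes "\<gamma> \<le> 0" "0 \<le> a" "0 \<le> b" "c \<le> a + b" "0 \<le> c"
  shows "(1 + b) powr \<gamma> \<le> (1 + a) powr (- \<gamma>) * (1 + c) powr \<gamma>"
proof -
  have "0 \<le> a * b" using assms by simp
  moreover have "(1 + a) * (1 + b) = 1 + a + b + a * b" by (simp add: algebra_simps)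
  ultimately have "1 + c \<le> (1 + a) * (1 + b)" using assms by linarith
  hence "((1 + a) * (1 + b)) powr \<gamma> \<le> (1 + c) powr \<gamma>"
    using assms by (intro powr_mono2') auto
  hence "(1 + a) powr \<gamma> * (1 + b) powr \<gamma> \<le> (1 + c) powr \<gamma>"
    using assms by (simp add: powr_mult)
  hence "(1 + a) powr (- \<gamma>) * ((1 + a) powr \<gamma> * (1 + b) powr \<gamma>) \<le> (1 + a) powr (- \<gamma>) * (1 + c) powr \<gamma>"
    by (intro mult_left_mono) auto
  moreover have "(1 + a) powr (- \<gamma>) * (1 + a) powr \<gamma> = 1"
    using assms by (simp add: powr_add[symmetric])
  ultimately show ?thesis by (simp add: mult.assoc[symmetric])
qed

lemma comb3:
  fixes a b c :: "int \<Rightarrow> real"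
  assumes "a summable_on A" "b summable_on A" "c summable_on A"
  shows "((\<lambda>k. a k - 2 * b k + c k) has_sum (infsum a A - 2 * infsum b A + infsum c A)) A"
  using has_sum_add[OF has_sum_add[OF has_sum_infsum[OF assms(1)] has_sum_cmult_right[OF has_sum_infsum[OF assms(2)], of "-2"]]
      has_sum_infsum[OF assms(3)]] by simp

lemma comb2:
  fixes a b :: "int \<Rightarrow> real"
  assumes "a summable_on A" "b summable_on A"
  shows "((\<lambda>k. - (x * a k + y * b k)) has_sum (- (x * infsum a A + y * infsum b A))) A"
  using has_sum_uminusI[OF has_sum_add[OF has_sum_cmult_right[OF has_sum_infsum[OF assms(1)], of x] has_sum_cmult_right[OF has_sum_infsum[OF assms(2)], of y]]] by simp


theorem mainTheorem3:
  fixes \<alpha> \<theta> h :: real and u :: "int \<Rightarrow> real"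
  assumes "1 < \<alpha>" "\<alpha> < 2" "\<bar>\<theta>\<bar> \<le> 2 - \<alpha>" "h > 0"
    and "(\<lambda>k. \<bar>u k\<bar> * (1 + \<bar>real_of_int k\<bar>) powr (1 - \<alpha>)) summable_on (UNIV::int set)"
  shows "(\<forall>j. (\<lambda>m. \<bar>u (j - int m) * vcoef (2 - \<alpha>) m\<bar>) summable_on (UNIV::nat set))
       \<and> (\<forall>j. (\<lambda>m. \<bar>u (j + int m) * vcoef (2 - \<alpha>) m\<bar>) summable_on (UNIV::nat set))
       \<and> (\<forall>i. (\<lambda>k. \<bar>u (i + k) * wcoef \<alpha> \<theta> k\<bar>) summable_on (UNIV::int set)
          \<and> - (cL \<alpha> \<theta> * (IL (2 - \<alpha>) h u (i - 1) - 2 * IL (2 - \<alpha>) h u i + IL (2 - \<alpha>) h u (i + 1)) / h\<^sup>2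
               + cR \<alpha> \<theta> * (IR (2 - \<alpha>) h u (i - 1) - 2 * IR (2 - \<alpha>) h u i + IR (2 - \<alpha>) h u (i + 1)) / h\<^sup>2)
            = 1 / h powr \<alpha> * (\<Sum>\<^sub>\<infinity>k\<in>(UNIV::int set). u (i + k) * wcoef \<alpha> \<theta> k))"
proof -
  define \<beta> where "\<beta> = 2 - \<alpha>"
  define V where "V = (\<lambda>n::int. if 0 \<le> n then vcoef (2 - \<alpha>) (nat n) else 0)"
  define g where "g = (\<lambda>k::int. \<bar>u k\<bar> * (1 + \<bar>real_of_int k\<bar>) powr (1 - \<alpha>))"
  have gs: "g summable_on UNIV" using assms(5) unfolding g_def .
  obtain C where C: "\<And>m. \<bar>vcoef \<beta> m\<bar> \<le> C * (1 + real m) powr (\<beta> - 1)"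
    using vcoef_bound[of \<beta>] assms(1,2) unfolding \<beta>_def by auto
  have C0: "0 \<le> C"
  proof -
    have "\<bar>vcoef \<beta> 0\<bar> \<le> C" using C[of 0] by simp
    thus ?thesis by linarith
  qed
  have Vb: "\<bar>V n\<bar> \<le> C * (1 + \<bar>real_of_int n\<bar>) powr (1 - \<alpha>)" for n
  proof (cases "0 \<le> n")
    case True
    then have "\<bar>V n\<bar> = \<bar>vcoef \<beta> (nat n)\<bar>" unfolding V_def \<beta>_def by simp
    also have "\<dots> \<le> C * (1 + real (nat n)) powr (\<beta> - 1)" by (rule C)
    also have "\<dots> = C * (1 + \<bar>real_of_int n\<bar>) powr (1 - \<alpha>)" using True unfolding \<beta>_def by simp
    finally show ?thesis .
  next
    case False
    then show ?thesis unfolding V_def using C0 by simp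
  qed
  have wL: "\<bar>u (j - n) * V n\<bar> \<le> (C * (1 + \<bar>real_of_int j\<bar>) powr (\<alpha> - 1)) * g (j - n)" for j n
  proof -
    have "(1 + \<bar>real_of_int n\<bar>) powr (1 - \<alpha>) \<le> (1 + \<bar>real_of_int j\<bar>) powr (- (1 - \<alpha>)) * (1 + \<bar>real_of_int (j - n)\<bar>) powr (1 - \<alpha>)"
      using assms(1) by (intro powr_weight) auto
    hence w: "(1 + \<bar>real_of_int n\<bar>) powr (1 - \<alpha>) \<le> (1 + \<bar>real_of_int j\<bar>) powr (\<alpha> - 1) * (1 + \<bar>real_of_int (j - n)\<bar>) powr (1 - \<alpha>)"
      by simp
    have "\<bar>u (j - n) * V n\<bar> \<le> \<bar>u (j - n)\<bar> * (C * (1 + \<bar>real_of_int n\<bar>) powr (1 - \<alpha>))"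
      unfolding abs_mult by (intro mult_left_mono Vb) auto
    also have "\<dots> \<le> \<bar>u (j - n)\<bar> * (C * ((1 + \<bar>real_of_int j\<bar>) powr (\<alpha> - 1) * (1 + \<bar>real_of_int (j - n)\<bar>) powr (1 - \<alpha>)))"
      using w C0 by (intro mult_left_mono) auto
    finally show ?thesis unfolding g_def by (simp add: algebra_simps)
  qed
  have wR: "\<bar>u (j + n) * V n\<bar> \<le> (C * (1 + \<bar>real_of_int j\<bar>) powr (\<alpha> - 1)) * g (n + j)" for j n
  proof -
    have "(1 + \<bar>real_of_int n\<bar>) powr (1 - \<alpha>) \<le> (1 + \<bar>real_of_int j\<bar>) powr (- (1 - \<alpha>)) * (1 + \<bar>real_of_int (j + n)\<bar>) powr (1 - \<alpha>)"
      using assms(1) by (intro powr_weight) auto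
    hence w: "(1 + \<bar>real_of_int n\<bar>) powr (1 - \<alpha>) \<le> (1 + \<bar>real_of_int j\<bar>) powr (\<alpha> - 1) * (1 + \<bar>real_of_int (j + n)\<bar>) powr (1 - \<alpha>)"
      by simp
    have "\<bar>u (j + n) * V n\<bar> \<le> \<bar>u (j + n)\<bar> * (C * (1 + \<bar>real_of_int n\<bar>) powr (1 - \<alpha>))"
      unfolding abs_mult by (intro mult_left_mono Vb) auto
    also have "\<dots> \<le> \<bar>u (j + n)\<bar> * (C * ((1 + \<bar>real_of_int j\<bar>) powr (\<alpha> - 1) * (1 + \<bar>real_of_int (j + n)\<bar>) powr (1 - \<alpha>)))"
      using w C0 by (intro mult_left_mono) auto
    finally show ?thesis unfolding g_def by (simp add: algebra_simps)
  qed
  have SLa: "(\<lambda>n. \<bar>u (j - n) * V n\<bar>) summable_on UNIV" for j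
  proof (rule summable_on_comparison_test)
    show "(\<lambda>n. (C * (1 + \<bar>real_of_int j\<bar>) powr (\<alpha> - 1)) * g (j - n)) summable_on UNIV"
      using gs shift_minus(1)[of g j] by (intro summable_on_cmult_right) auto
  qed (use wL in auto)
  have SRa: "(\<lambda>n. \<bar>u (j + n) * V n\<bar>) summable_on UNIV" for j
  proof (rule summable_on_comparison_test)
    show "(\<lambda>n. (C * (1 + \<bar>real_of_int j\<bar>) powr (\<alpha> - 1)) * g (n + j)) summable_on UNIV"
      using gs shift_plus(1)[of g j] by (intro summable_on_cmult_right) auto
  qed (use wR in auto)
  have SL: "(\<lambda>n. u (j - n) * V n) summable_on UNIV" for j
    using summable_on_iff_abs_summable_on_real[of "\<lambda>n. u (j - n) * V n" UNIV] SLa[of j] by simp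
  have SR: "(\<lambda>n. u (j + n) * V n) summable_on UNIV" for j
    using summable_on_iff_abs_summable_on_real[of "\<lambda>n. u (j + n) * V n" UNIV] SRa[of j] by simp
  have Vnat: "V (int m) = vcoef (2 - \<alpha>) m" for m unfolding V_def by simp
  have Vneg: "n < 0 \<Longrightarrow> V n = 0" for n unfolding V_def by simp
  have part1: "(\<lambda>m. \<bar>u (j - int m) * vcoef (2 - \<alpha>) m\<bar>) summable_on (UNIV::nat set)" for j
  proof -
    have z: "\<And>n. n < 0 \<Longrightarrow> \<bar>u (j - n) * V n\<bar> = 0" using Vneg by simp
    have "(\<lambda>m::nat. \<bar>u (j - int m) * V (int m)\<bar>) summable_on UNIV"
      using nat_int_sum(1)[of "\<lambda>n. \<bar>u (j - n) * V n\<bar>", OF z] SLa[of j] by blast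
    thus ?thesis unfolding Vnat .
  qed
  have part2: "(\<lambda>m. \<bar>u (j + int m) * vcoef (2 - \<alpha>) m\<bar>) summable_on (UNIV::nat set)" for j
  proof -
    have z: "\<And>n. n < 0 \<Longrightarrow> \<bar>u (j + n) * V n\<bar> = 0" using Vneg by simp
    have "(\<lambda>m::nat. \<bar>u (j + int m) * V (int m)\<bar>) summable_on UNIV"
      using nat_int_sum(1)[of "\<lambda>n. \<bar>u (j + n) * V n\<bar>", OF z] SRa[of j] by blast
    thus ?thesis unfolding Vnat .
  qed
  have ILeq: "IL (2 - \<alpha>) h u j = h powr (2 - \<alpha>) * infsum (\<lambda>n. u (j - n) * V n) UNIV" for j
  proof -
    have z: "\<And>n. n < 0 \<Longrightarrow> u (j - n) * V n = 0" using Vneg by simp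
    have "infsum (\<lambda>m::nat. u (j - int m) * V (int m)) UNIV = infsum (\<lambda>n. u (j - n) * V n) UNIV"
      by (rule nat_int_sum(2)[of "\<lambda>n. u (j - n) * V n", OF z])
    thus ?thesis unfolding IL_def Vnat by simp
  qed
  have IReq: "IR (2 - \<alpha>) h u j = h powr (2 - \<alpha>) * infsum (\<lambda>n. u (j + n) * V n) UNIV" for j
  proof -
    have z: "\<And>n. n < 0 \<Longrightarrow> u (j + n) * V n = 0" using Vneg by simp
    have "infsum (\<lambda>m::nat. u (j + int m) * V (int m)) UNIV = infsum (\<lambda>n. u (j + n) * V n) UNIV"
      by (rule nat_int_sum(2)[of "\<lambda>n. u (j + n) * V n", OF z])
    thus ?thesis unfolding IR_def Vnat by simp
  qed
  have part3: "(\<lambda>k. \<bar>u (i + k) * wcoef \<alpha> \<theta> k\<bar>) summable_on (UNIV::int set)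
          \<and> - (cL \<alpha> \<theta> * (IL (2 - \<alpha>) h u (i - 1) - 2 * IL (2 - \<alpha>) h u i + IL (2 - \<alpha>) h u (i + 1)) / h\<^sup>2
               + cR \<alpha> \<theta> * (IR (2 - \<alpha>) h u (i - 1) - 2 * IR (2 - \<alpha>) h u i + IR (2 - \<alpha>) h u (i + 1)) / h\<^sup>2)
            = 1 / h powr \<alpha> * (\<Sum>\<^sub>\<infinity>k\<in>(UNIV::int set). u (i + k) * wcoef \<alpha> \<theta> k)" for i
  proof -
    have Ld: "infsum (\<lambda>n. u (j - n) * V n) UNIV = infsum (\<lambda>k. u (i + k) * V (j - i - k)) UNIV"
      and Ls: "(\<lambda>k. u (i + k) * V (j - i - k)) summable_on UNIV" for j
    proof -
      have e: "(\<lambda>k. u (j - (j - i - k)) * V (j - i - k)) = (\<lambda>k. u (i + k) * V (j - i - k))" by simp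
      show "infsum (\<lambda>n. u (j - n) * V n) UNIV = infsum (\<lambda>k. u (i + k) * V (j - i - k)) UNIV"
        using shift_minus(2)[of "\<lambda>n. u (j - n) * V n" "j - i"] e by simp
      show "(\<lambda>k. u (i + k) * V (j - i - k)) summable_on UNIV"
        using shift_minus(1)[of "\<lambda>n. u (j - n) * V n" "j - i"] e SL[of j] by simp
    qed
    have Rd: "infsum (\<lambda>n. u (j + n) * V n) UNIV = infsum (\<lambda>k. u (i + k) * V (k + (i - j))) UNIV"
      and Rs: "(\<lambda>k. u (i + k) * V (k + (i - j))) summable_on UNIV" for j
    proof -
      have e: "(\<lambda>k. u (j + (k + (i - j))) * V (k + (i - j))) = (\<lambda>k. u (i + k) * V (k + (i - j)))" by (simp add: add.commute)
      show "infsum (\<lambda>n. u (j + n) * V n) UNIV = infsum (\<lambda>k. u (i + k) * V (k + (i - j))) UNIV"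
        using shift_plus(2)[of "\<lambda>n. u (j + n) * V n" "i - j"] e by simp
      show "(\<lambda>k. u (i + k) * V (k + (i - j))) summable_on UNIV"
        using shift_plus(1)[of "\<lambda>n. u (j + n) * V n" "i - j"] e SR[of j] by simp
    qed
    define a where "a = (\<lambda>k. u (i + k) * V (-1 - k))"
    define b where "b = (\<lambda>k. u (i + k) * V (- k))"
    define c where "c = (\<lambda>k. u (i + k) * V (1 - k))"
    define a' where "a' = (\<lambda>k. u (i + k) * V (k + 1))"
    define b' where "b' = (\<lambda>k. u (i + k) * V k)"
    define c' where "c' = (\<lambda>k. u (i + k) * V (k - 1))"
    have as: "a summable_on UNIV" using Ls[of "i - 1"] unfolding a_def by simp
    have bs: "b summable_on UNIV" using Ls[of "i"] unfolding b_def by simp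
    have cs: "c summable_on UNIV" using Ls[of "i + 1"] unfolding c_def by simp
    have as': "a' summable_on UNIV" using Rs[of "i - 1"] unfolding a'_def by simp
    have bs': "b' summable_on UNIV" using Rs[of "i"] unfolding b'_def by simp
    have cs': "c' summable_on UNIV" using Rs[of "i + 1"] unfolding c'_def by (simp add: algebra_simps)
    have IL1: "IL (2 - \<alpha>) h u (i - 1) = h powr (2 - \<alpha>) * infsum a UNIV"
      unfolding ILeq Ld[of "i - 1"] a_def by simp
    have IL2: "IL (2 - \<alpha>) h u i = h powr (2 - \<alpha>) * infsum b UNIV"
      unfolding ILeq Ld[of "i"] b_def by simp
    have IL3: "IL (2 - \<alpha>) h u (i + 1) = h powr (2 - \<alpha>) * infsum c UNIV"
      unfolding ILeq Ld[of "i + 1"] c_def by simp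
    have IR1: "IR (2 - \<alpha>) h u (i - 1) = h powr (2 - \<alpha>) * infsum a' UNIV"
      unfolding IReq Rd[of "i - 1"] a'_def by simp
    have IR2: "IR (2 - \<alpha>) h u i = h powr (2 - \<alpha>) * infsum b' UNIV"
      unfolding IReq Rd[of "i"] b'_def by simp
    have IR3: "IR (2 - \<alpha>) h u (i + 1) = h powr (2 - \<alpha>) * infsum c' UNIV"
      unfolding IReq Rd[of "i + 1"] c'_def by (simp add: algebra_simps)
    define AL where "AL = (\<lambda>k. a k - 2 * b k + c k)"
    define AR where "AR = (\<lambda>k. a' k - 2 * b' k + c' k)"
    have hL: "(AL has_sum (infsum a UNIV - 2 * infsum b UNIV + infsum c UNIV)) UNIV"
      unfolding AL_def by (rule comb3[OF as bs cs])
    have hR: "(AR has_sum (infsum a' UNIV - 2 * infsum b' UNIV + infsum c' UNIV)) UNIV"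
      unfolding AR_def by (rule comb3[OF as' bs' cs'])
    have ALs: "AL summable_on UNIV" using hL by (auto simp: summable_on_def)
    have ARs: "AR summable_on UNIV" using hR by (auto simp: summable_on_def)
    have wk: "u (i + k) * wcoef \<alpha> \<theta> k = - (cL \<alpha> \<theta> * AL k + cR \<alpha> \<theta> * AR k)" for k
      unfolding wcoef_eq[OF assms(2), of \<theta> k] AL_def AR_def a_def b_def c_def a'_def b'_def c'_def V_def
      by (simp add: algebra_simps)
    have hW: "((\<lambda>k. u (i + k) * wcoef \<alpha> \<theta> k) has_sum (- (cL \<alpha> \<theta> * infsum AL UNIV + cR \<alpha> \<theta> * infsum AR UNIV))) UNIV"
      unfolding wk by (rule comb2[OF ALs ARs])
    have Wsum: "infsum (\<lambda>k. u (i + k) * wcoef \<alpha> \<theta> k) UNIV = - (cL \<alpha> \<theta> * infsum AL UNIV + cR \<alpha> \<theta> * infsum AR UNIV)"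
      using hW by (rule infsumI)
    have Ws: "(\<lambda>k. \<bar>u (i + k) * wcoef \<alpha> \<theta> k\<bar>) summable_on UNIV"
      using hW summable_on_iff_abs_summable_on_real[of "\<lambda>k. u (i + k) * wcoef \<alpha> \<theta> k" UNIV]
      by (auto simp: summable_on_def)
    have hp: "h powr (2 - \<alpha>) / h\<^sup>2 = 1 / h powr \<alpha>"
      using assms(4) by (simp add: powr_diff powr_numeral)
    have "- (cL \<alpha> \<theta> * (IL (2 - \<alpha>) h u (i - 1) - 2 * IL (2 - \<alpha>) h u i + IL (2 - \<alpha>) h u (i + 1)) / h\<^sup>2
               + cR \<alpha> \<theta> * (IR (2 - \<alpha>) h u (i - 1) - 2 * IR (2 - \<alpha>) h u i + IR (2 - \<alpha>) h u (i + 1)) / h\<^sup>2)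
       = - (h powr (2 - \<alpha>) / h\<^sup>2) * (cL \<alpha> \<theta> * infsum AL UNIV + cR \<alpha> \<theta> * infsum AR UNIV)"
      unfolding IL1 IL2 IL3 IR1 IR2 IR3 infsumI[OF hL] infsumI[OF hR]
      using assms(4) by (simp add: field_simps)
    also have "\<dots> = 1 / h powr \<alpha> * (\<Sum>\<^sub>\<infinity>k\<in>(UNIV::int set). u (i + k) * wcoef \<alpha> \<theta> k)"
      unfolding Wsum hp by (simp add: diff_divide_distrib add_divide_distrib)
    finally show ?thesis using Ws by blast
  qed
  show ?thesis using part1 part2 part3 by blast
qed

end
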